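(* There exists an absolute constant $c > 0$ so that asymptotically almost surely (i.e., with probability tending to $1$ as $n\to\infty$) every triangle $T(X)$ contains a vertex of $\mathcal{G}_2(n,r)$, provided $r^5 > c \frac{\log n}{n}$.
   Context: $\mathcal{G}_2(n,r)$ is the random geometric graph with vertex set $[n]$ in which $n$ points are chosen uniformly at random and independently from $[0,1]^2$, two vertices being adjacent if their Euclidean distance is at most $r$, where $r=r(n)$ may depend on $n$. Let $O$ be the center of $[0,1]^2$. For each point $X$ of the unit square whose distance from $O$ is at least $r/2$ and whose distance from the boundary of the square is at least $r^2/10^3$, $T(X)$ is the isosceles triangle defined as follows: one vertex is $X$; the segment of length $r^2/100$ on the line $OX$ starting at $X$ and going towards $O$ is the height of $T(X)$; the base is orthogonal to this height and has length $r^3/10^5$. *)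

theory Defs
  imports "HOL-Probability.Probability"
begin

definition unit_sq :: "(real \<times> real) set" where
  "unit_sq = {0..1} \<times> {0..1}"

definition centre :: "real \<times> real" where
  "centre = (1/2, 1/2)"

definition bdist :: "real \<times> real \<Rightarrow> real" where
  "bdist X = min (min (fst X) (1 - fst X)) (min (snd X) (1 - snd X))"

text \<open>Points X for which T(X) is defined (for radius r).\<close>
definition admissible :: "real \<Rightarrow> real \<times> real \<Rightarrow> bool" where
  "admissible r X \<longleftrightarrow> X \<in> unit_sq \<and> dist X centre \<ge> r / 2 \<and> bdist X \<ge> r^2 / 10^3"

text \<open>The closed isosceles triangle T(X): apex X, height of length r^2/100 along
  the segment from X towards O, base orthogonal to the height of length r^3/10^5.\<close>
definition tri :: "real \<Rightarrow> real \<times> real \<Rightarrow> (real \<times> real) set" where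
  "tri r X =
    (let u = (1 / dist X centre) *\<^sub>R (centre - X);
         v = (- snd u, fst u);
         M = X + (r^2 / 100) *\<^sub>R u;
         b = r^3 / 10^5
     in convex hull {X, M + (b/2) *\<^sub>R v, M - (b/2) *\<^sub>R v})"

text \<open>The probability space of n independent uniform points in the unit square
  (vertex i of G_2(n,r) is placed at \<omega> i).\<close>
definition rgg_space :: "nat \<Rightarrow> (nat \<Rightarrow> real \<times> real) measure" where
  "rgg_space n = PiM {..<n} (\<lambda>_. uniform_measure lborel unit_sq)"

end

theory Submission
  imports Defs
begin


definition uu :: "real \<times> real \<Rightarrow> real \<times> real" where
  "uu X = (1 / dist X centre) *\<^sub>R (centre - X)"
definition vv :: "real \<times> real \<Rightarrow> real \<times> real" where
  "vv X = (- snd (uu X), fst (uu X))"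
definition B1 :: "real \<Rightarrow> real \<times> real \<Rightarrow> real \<times> real" where
  "B1 r X = X + (r^2/100) *\<^sub>R uu X + (r^3/10^5/2) *\<^sub>R vv X"
definition B2 :: "real \<Rightarrow> real \<times> real \<Rightarrow> real \<times> real" where
  "B2 r X = X + (r^2/100) *\<^sub>R uu X - (r^3/10^5/2) *\<^sub>R vv X"

lemma tri_eq: "tri r X = convex hull {X, B1 r X, B2 r X}"
  by (simp only: tri_def Let_def B1_def B2_def uu_def vv_def)

lemma dist_centre: "dist X centre = sqrt ((fst X - 1/2)^2 + (snd X - 1/2)^2)"
  by (simp add: dist_prod_def centre_def dist_real_def)

lemma uu_norm:
  assumes "dist X centre > 0"
  shows "fst (uu X)^2 + snd (uu X)^2 = 1"
proof -
  let ?d = "dist X centre"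
  have d2: "?d^2 = (fst X - 1/2)^2 + (snd X - 1/2)^2"
    by (simp add: dist_centre)
  have "fst (uu X)^2 + snd (uu X)^2 = ((1/2 - fst X)^2 + (1/2 - snd X)^2) / ?d^2"
    by (simp add: uu_def centre_def power_divide add_divide_distrib)
  also have "\<dots> = 1"
  proof -
    have "(1/2 - fst X)^2 + (1/2 - snd X)^2 = ?d^2" using d2 by (simp add: power2_commute)
    then show ?thesis using assms by simp
  qed
  finally show ?thesis .
qed

lemma tri_mem:
  assumes d: "dist X centre > 0" and r: "r > 0"
    and s1: "r^2/100/2 \<le> (fst q - fst X) * fst (uu X) + (snd q - snd X) * snd (uu X)"
    and s2: "(fst q - fst X) * fst (uu X) + (snd q - snd X) * snd (uu X) \<le> r^2/100"
    and t: "\<bar>- (fst q - fst X) * snd (uu X) + (snd q - snd X) * fst (uu X)\<bar> \<le> r^3/10^5/4"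
  shows "q \<in> tri r X"
proof -
  define ux where "ux = fst (uu X)"
  define uy where "uy = snd (uu X)"
  define H where "H = r^2/100"
  define B where "B = r^3/10^5"
  define s where "s = (fst q - fst X) * ux + (snd q - snd X) * uy"
  define t where "t = - (fst q - fst X) * uy + (snd q - snd X) * ux"
  have n1: "ux^2 + uy^2 = 1" using uu_norm[OF d] by (simp add: ux_def uy_def)
  have H: "H > 0" "B > 0" using r by (auto simp: H_def B_def)
  have s1': "H/2 \<le> s" "s \<le> H" "\<bar>t\<bar> \<le> B/4"
    using s1 s2 t by (simp_all add: H_def B_def s_def t_def ux_def uy_def)
  have qx: "fst q = fst X + s * ux - t * uy"
  proof -
    have "s * ux - t * uy = (fst q - fst X) * (ux^2 + uy^2)"
      by (simp add: s_def t_def power2_eq_square algebra_simps)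
    then show ?thesis using n1 by simp
  qed
  have qy: "snd q = snd X + s * uy + t * ux"
  proof -
    have "s * uy + t * ux = (snd q - snd X) * (ux^2 + uy^2)"
      by (simp add: s_def t_def power2_eq_square algebra_simps)
    then show ?thesis using n1 by simp
  qed
  define a where "a = 1 - s/H"
  define b where "b = s/(2*H) + t/B"
  define c where "c = s/(2*H) - t/B"
  have tb: "\<bar>t/B\<bar> \<le> 1/4" using s1' H by (simp add: abs_divide divide_le_eq)
  have sh: "s/(2*H) \<ge> 1/4" using s1' H by (simp add: le_divide_eq)
  have sh1: "s/H \<le> 1" using s1' H by (simp add: divide_le_eq)
  have w: "0 \<le> a" "0 \<le> b" "0 \<le> c" "a + b + c = 1"
  proof -
    show "0 \<le> a" using sh1 by (simp add: a_def)
    show "0 \<le> b" using tb sh unfolding b_def by (simp only: abs_le_iff) linarith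
    show "0 \<le> c" using tb sh unfolding c_def by (simp only: abs_le_iff) linarith
    have "s/(2*H) + s/(2*H) = s/H" by (simp add: field_simps)
    then show "a + b + c = 1" by (simp add: a_def b_def c_def)
  qed
  have uxy: "uu X = (ux, uy)" by (simp add: ux_def uy_def)
  have B1e: "B1 r X = (fst X + H * ux - B/2 * uy, snd X + H * uy + B/2 * ux)"
    by (simp add: B1_def vv_def uxy H_def B_def prod_eq_iff)
  have B2e: "B2 r X = (fst X + H * ux + B/2 * uy, snd X + H * uy - B/2 * ux)"
    by (simp add: B2_def vv_def uxy H_def B_def prod_eq_iff)
  have bc1: "(b + c) * H = s" using H by (simp add: b_def c_def field_simps)
  have bc2: "(b - c) * (B/2) = t" using H by (simp add: b_def c_def field_simps)
  have e1: "a * fst X + b * (fst X + H * ux - B/2 * uy) + c * (fst X + H * ux + B/2 * uy)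
      = (a + b + c) * fst X + ((b + c) * H) * ux - ((b - c) * (B/2)) * uy"
    by (simp add: field_simps)
  have e2: "a * snd X + b * (snd X + H * uy + B/2 * ux) + c * (snd X + H * uy - B/2 * ux)
      = (a + b + c) * snd X + ((b + c) * H) * uy + ((b - c) * (B/2)) * ux"
    by (simp add: field_simps)
  have "q = a *\<^sub>R X + b *\<^sub>R B1 r X + c *\<^sub>R B2 r X"
  proof (rule prod_eqI)
    show "fst q = fst (a *\<^sub>R X + b *\<^sub>R B1 r X + c *\<^sub>R B2 r X)"
      unfolding qx B1e B2e using e1 bc1 bc2 w(4) by simp
    show "snd q = snd (a *\<^sub>R X + b *\<^sub>R B1 r X + c *\<^sub>R B2 r X)"
      unfolding qy B1e B2e using e2 bc1 bc2 w(4) by simp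
  qed
  then show ?thesis unfolding tri_eq convex_hull_3 using w by blast
qed



lemma unit_vec_diff:
  fixes a b :: "'a::real_normed_vector"
  assumes "a \<noteq> 0"
  shows "norm ((1/norm a) *\<^sub>R a - (1/norm b) *\<^sub>R b) \<le> 2 * norm (a - b) / norm a"
proof (cases "b = 0")
  case True then show ?thesis using assms by simp
next
  case False
  have na: "norm a > 0" using assms by simp
  have nb: "norm b > 0" using False by simp
  have "norm ((1/norm a) *\<^sub>R a - (1/norm b) *\<^sub>R b)
     \<le> norm ((1/norm a) *\<^sub>R a - (1/norm a) *\<^sub>R b) + norm ((1/norm a) *\<^sub>R b - (1/norm b) *\<^sub>R b)"
    using norm_triangle_ineq[of "(1/norm a) *\<^sub>R a - (1/norm a) *\<^sub>R b" "(1/norm a) *\<^sub>R b - (1/norm b) *\<^sub>R b"]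
    by simp
  also have "norm ((1/norm a) *\<^sub>R a - (1/norm a) *\<^sub>R b) = norm (a - b) / norm a"
    by (simp add: scaleR_diff_right[symmetric] divide_inverse)
  also have "norm ((1/norm a) *\<^sub>R b - (1/norm b) *\<^sub>R b) = \<bar>1/norm a - 1/norm b\<bar> * norm b"
    by (simp add: scaleR_diff_left[symmetric])
  also have "\<bar>1/norm a - 1/norm b\<bar> * norm b = \<bar>norm b - norm a\<bar> / norm a"
  proof -
    have "1/norm a - 1/norm b = (norm b - norm a)/(norm a * norm b)"
      using na nb by (simp add: divide_simps)
    then show ?thesis using na nb by (simp add: abs_divide abs_mult)
  qed
  also have "\<bar>norm b - norm a\<bar> \<le> norm (a - b)"
    by (metis norm_triangle_ineq3 norm_minus_commute)
  finally show ?thesis using na by (simp add: divide_right_mono add_divide_distrib[symmetric])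
qed

lemma uu_close:
  assumes "dist X centre > 0"
  shows "norm (uu X - uu Y) \<le> 2 * dist X Y / dist X centre"
proof -
  have "norm (uu X - uu Y) \<le> 2 * norm ((centre - X) - (centre - Y)) / norm (centre - X)"
    unfolding uu_def using unit_vec_diff[of "centre - X" "centre - Y"] assms
    by (simp add: dist_norm norm_minus_commute)
  also have "\<dots> = 2 * dist X Y / dist X centre"
    by (simp add: dist_norm norm_minus_commute)
  finally show ?thesis .
qed

lemma norm_vv_diff: "norm (vv X - vv Y) = norm (uu X - uu Y)"
  by (simp add: vv_def norm_prod_def power2_commute add.commute)

lemma norm_uu: "dist X centre > 0 \<Longrightarrow> norm (uu X) = 1"
  using uu_norm[of X] by (simp add: norm_prod_def)

lemma inner_uu_vv: "inner (uu X) (vv X) = 0"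
  by (simp add: vv_def inner_prod_def)

lemma decomp:
  assumes "dist X centre > 0"
  shows "w = inner w (uu X) *\<^sub>R uu X + inner w (vv X) *\<^sub>R vv X"
proof -
  have n: "fst (uu X)^2 + snd (uu X)^2 = 1" using uu_norm[OF assms] .
  show ?thesis
  proof (rule prod_eqI)
    have "fst w = fst w * (fst (uu X)^2 + snd (uu X)^2)" using n by simp
    then show "fst w = fst (inner w (uu X) *\<^sub>R uu X + inner w (vv X) *\<^sub>R vv X)"
      by (simp add: vv_def inner_prod_def power2_eq_square algebra_simps)
    have "snd w = snd w * (fst (uu X)^2 + snd (uu X)^2)" using n by simp
    then show "snd w = snd (inner w (uu X) *\<^sub>R uu X + inner w (vv X) *\<^sub>R vv X)"
      by (simp add: vv_def inner_prod_def power2_eq_square algebra_simps)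
  qed
qed

lemma norm_le_coords:
  assumes "dist X centre > 0"
  shows "norm w \<le> \<bar>inner w (uu X)\<bar> + \<bar>inner w (vv X)\<bar>"
proof -
  have nv: "norm (vv X) = 1" using norm_uu[OF assms] by (simp add: vv_def norm_prod_def add.commute)
  have "norm w = norm (inner w (uu X) *\<^sub>R uu X + inner w (vv X) *\<^sub>R vv X)"
    using decomp[OF assms] by metis
  also have "\<dots> \<le> norm (inner w (uu X) *\<^sub>R uu X) + norm (inner w (vv X) *\<^sub>R vv X)"
    by (rule norm_triangle_ineq)
  also have "\<dots> = \<bar>inner w (uu X)\<bar> + \<bar>inner w (vv X)\<bar>"
    using norm_uu[OF assms] nv by simp
  finally show ?thesis .
qed

lemma tri_mem':
  assumes d: "dist X centre > 0" and r: "r > 0"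
    and "r^2/100/2 \<le> inner (q - X) (uu X)" "inner (q - X) (uu X) \<le> r^2/100"
    and "\<bar>inner (q - X) (vv X)\<bar> \<le> r^3/10^5/4"
  shows "q \<in> tri r X"
  using assms by (intro tri_mem) (auto simp: inner_prod_def vv_def algebra_simps)



lemma inner_self_uu: "dist X centre > 0 \<Longrightarrow> inner (uu X) (uu X) = 1"
  using norm_uu[of X] by (simp add: power2_norm_eq_inner[symmetric])

lemma contain:
  assumes r: "0 < r" "r \<le> 3/2" and X: "admissible r X"
    and dXY: "dist X Y \<le> r^3/(16*10^5)"
    and q1: "\<bar>inner (q - (Y + (3/4*(r^2/100)) *\<^sub>R uu Y)) (uu Y)\<bar> \<le> r^2/100/8"
    and q2: "\<bar>inner (q - (Y + (3/4*(r^2/100)) *\<^sub>R uu Y)) (vv Y)\<bar> \<le> r^3/10^5/8"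
  shows "r^2/100/2 \<le> inner (q - X) (uu X) \<and> inner (q - X) (uu X) \<le> r^2/100
       \<and> \<bar>inner (q - X) (vv X)\<bar> \<le> r^3/10^5/4"
proof -
  define H where "H = r^2/100"
  define B where "B = r^3/10^5"
  define \<delta> where "\<delta> = r^3/(16*10^5)"
  have Bd: "B = 16 * \<delta>" by (simp add: B_def \<delta>_def)
  have HB: "B \<le> H"
  proof -
    have "r^3 = r * r^2" by (simp add: power2_eq_square power3_eq_cube)
    also have "\<dots> \<le> (3/2) * r^2" using r by (intro mult_right_mono) auto
    finally have "r^3 \<le> 3/2 * r^2" .
    moreover have "3/2 * r^2 \<le> 1000 * r^2" by simp
    ultimately have "r^3 \<le> 1000 * r^2" by linarith
    then show ?thesis by (simp add: B_def H_def)
  qed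
  have dpos: "\<delta> > 0" using r by (simp add: \<delta>_def)
  have dX: "dist X centre \<ge> r/2" using X by (simp add: admissible_def)
  have dsmall: "\<delta> \<le> r/4"
  proof -
    have "r^3 = r * r^2" by (simp add: power2_eq_square power3_eq_cube)
    also have "\<dots> \<le> r * (3/2)^2" using r by (intro mult_left_mono power_mono) auto
    also have "\<dots> \<le> r * 400000" using r by (intro mult_left_mono) (auto simp: power2_eq_square)
    finally show ?thesis using r by (simp add: \<delta>_def)
  qed
  have dX0: "dist X centre > 0" using dX r by linarith
  have dXY4: "dist X Y \<le> r/4" using dXY dsmall by (simp add: \<delta>_def)
  have dY0: "dist Y centre > 0"
  proof -
    have "dist X centre \<le> dist X Y + dist Y centre" by (rule dist_triangle)
    then show ?thesis using dXY4 dX r by linarith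
  qed
  define C where "C = Y + (3/4*H) *\<^sub>R uu Y"
  define sY where "sY = inner (q - Y) (uu Y)"
  define tY where "tY = inner (q - Y) (vv Y)"
  have sYe: "sY = 3/4*H + inner (q - C) (uu Y)"
    using inner_self_uu[OF dY0] by (simp add: sY_def C_def inner_diff_left inner_add_left)
  have tYe: "tY = inner (q - C) (vv Y)"
    using inner_uu_vv[of Y] by (simp add: tY_def C_def inner_diff_left inner_add_left)
  have q1': "\<bar>inner (q - C) (uu Y)\<bar> \<le> H/8" using q1 by (simp add: C_def H_def)
  have q2': "\<bar>inner (q - C) (vv Y)\<bar> \<le> B/8" using q2 by (simp add: C_def H_def B_def)
  have sYb: "5/8*H \<le> sY" "sY \<le> 7/8*H" using sYe q1' by (auto simp: abs_le_iff)
  have tYb: "\<bar>tY\<bar> \<le> B/8" using tYe q2' by simp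
  have nq: "norm (q - Y) \<le> H"
  proof -
    have "norm (q - Y) \<le> \<bar>sY\<bar> + \<bar>tY\<bar>" using norm_le_coords[OF dY0] by (simp add: sY_def tY_def)
    also have "\<dots> \<le> 7/8*H + B/8" using sYb tYb H_def by auto
    also have "\<dots> \<le> H" using HB by simp
    finally show ?thesis .
  qed
  have du: "norm (uu X - uu Y) \<le> 4 * \<delta> / r"
  proof -
    have "norm (uu X - uu Y) \<le> 2 * dist X Y / dist X centre" by (rule uu_close[OF dX0])
    also have "\<dots> \<le> 2 * \<delta> / (r/2)"
      using dXY dX r dpos by (intro frac_le) (auto simp: \<delta>_def)
    finally show ?thesis by simp
  qed
  have dv: "norm (vv X - vv Y) \<le> 4 * \<delta> / r" using du norm_vv_diff by simp
  have err1: "\<bar>inner (q - Y) (uu X - uu Y)\<bar> \<le> H * (4 * \<delta> / r)"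
    using Cauchy_Schwarz_ineq2[of "q - Y" "uu X - uu Y"] nq du
    by (meson mult_mono norm_ge_zero order_trans)
  have err1': "\<bar>inner (q - Y) (vv X - vv Y)\<bar> \<le> H * (4 * \<delta> / r)"
    using Cauchy_Schwarz_ineq2[of "q - Y" "vv X - vv Y"] nq dv
    by (meson mult_mono norm_ge_zero order_trans)
  have nvX: "norm (vv X) = 1" using norm_uu[OF dX0] by (simp add: vv_def norm_prod_def add.commute)
  have err2: "\<bar>inner (Y - X) (uu X)\<bar> \<le> \<delta>"
    using Cauchy_Schwarz_ineq2[of "Y - X" "uu X"] norm_uu[OF dX0] dXY
    by (simp add: dist_norm norm_minus_commute \<delta>_def)
  have err2': "\<bar>inner (Y - X) (vv X)\<bar> \<le> \<delta>"
    using Cauchy_Schwarz_ineq2[of "Y - X" "vv X"] nvX dXY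
    by (simp add: dist_norm norm_minus_commute \<delta>_def)
  have Hd: "H * (4 * \<delta> / r) \<le> \<delta>"
  proof -
    have "H * (4 * \<delta> / r) = \<delta> * (r / 25)" using r by (simp add: H_def power2_eq_square field_simps)
    also have "\<dots> \<le> \<delta> * 1" using r dpos by (intro mult_left_mono) auto
    finally show ?thesis by simp
  qed
  have sX: "inner (q - X) (uu X) = sY + inner (q - Y) (uu X - uu Y) + inner (Y - X) (uu X)"
    by (simp add: sY_def inner_diff_left inner_diff_right)
  have tX: "inner (q - X) (vv X) = tY + inner (q - Y) (vv X - vv Y) + inner (Y - X) (vv X)"
    by (simp add: tY_def inner_diff_left inner_diff_right)
  have "H/2 \<le> inner (q - X) (uu X)" "inner (q - X) (uu X) \<le> H"
    "\<bar>inner (q - X) (vv X)\<bar> \<le> B/4"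
    using sX tX sYb tYb err1 err1' err2 err2' Hd Bd HB
    by (auto simp: abs_le_iff)
  then show ?thesis by (simp add: H_def B_def)
qed

lemma interp:
  fixes a b l :: real
  assumes "0 \<le> l" "l \<le> 1"
  shows "min a b \<le> a + l * (b - a)" "a + l * (b - a) \<le> max a b"
proof -
  have "min a b \<le> a + l * (b - a) \<and> a + l * (b - a) \<le> max a b"
  proof (cases "a \<le> b")
    case True
    have "0 \<le> l * (b - a)" "l * (b - a) \<le> b - a" using assms True
      by (simp_all add: mult_left_le_one_le)
    then show ?thesis using True by auto
  next
    case False
    have "l * (a - b) \<ge> 0" "l * (a - b) \<le> a - b" using assms False
      by (simp_all add: mult_left_le_one_le)
    then show ?thesis using False by (auto simp: algebra_simps)
  qed
  then show "min a b \<le> a + l * (b - a)" "a + l * (b - a) \<le> max a b" by auto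
qed

lemma in_square:
  assumes r: "0 < r" "r \<le> 3/2" and X: "admissible r X"
    and s: "0 \<le> inner (q - X) (uu X)" "inner (q - X) (uu X) \<le> r^2/100"
    and t: "\<bar>inner (q - X) (vv X)\<bar> \<le> r^3/10^5/4"
  shows "q \<in> unit_sq"
proof -
  define D where "D = dist X centre"
  have dX: "D \<ge> r/2" using X by (simp add: admissible_def D_def)
  have D0: "D > 0" using dX r by linarith
  define s where "s = inner (q - X) (uu X)"
  define t where "t = inner (q - X) (vv X)"
  define lam where "lam = s / D"
  have r2: "r^2/100 \<le> r/2"
  proof -
    have "r^2 = r * r" by (simp add: power2_eq_square)
    also have "\<dots> \<le> r * 50" using r by (intro mult_left_mono) auto
    finally show ?thesis by simp
  qed
  have l01: "0 \<le> lam" "lam \<le> 1" using s dX D0 r2 by (auto simp: lam_def s_def divide_simps)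
  have dec: "q - X = s *\<^sub>R uu X + t *\<^sub>R vv X" using decomp[OF D0[unfolded D_def]] by (simp add: s_def t_def)
  have uux: "fst (uu X) = (1/2 - fst X)/D" "snd (uu X) = (1/2 - snd X)/D"
    by (simp_all add: uu_def D_def centre_def)
  have u1: "\<bar>fst (uu X)\<bar> \<le> 1" "\<bar>snd (uu X)\<bar> \<le> 1"
  proof -
    have n: "fst (uu X)^2 + snd (uu X)^2 = 1" using uu_norm[OF D0[unfolded D_def]] .
    have "fst (uu X)^2 \<le> 1" "snd (uu X)^2 \<le> 1" using n zero_le_power2[of "fst (uu X)"] zero_le_power2[of "snd (uu X)"] by linarith+
    then show "\<bar>fst (uu X)\<bar> \<le> 1" "\<bar>snd (uu X)\<bar> \<le> 1" by (simp_all add: abs_square_le_1)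
  qed
  have qx: "fst q = fst X + lam * (1/2 - fst X) - t * snd (uu X)"
    using arg_cong[OF dec, of fst] D0 by (simp add: vv_def uux lam_def field_simps)
  have qy: "snd q = snd X + lam * (1/2 - snd X) + t * fst (uu X)"
    using arg_cong[OF dec, of snd] D0 by (simp add: vv_def uux lam_def field_simps)
  have bd: "r^2/10^3 \<le> fst X" "r^2/10^3 \<le> 1 - fst X" "r^2/10^3 \<le> snd X" "r^2/10^3 \<le> 1 - snd X"
    using X by (auto simp: admissible_def bdist_def)
  have tb: "\<bar>t\<bar> \<le> r^2/10^3"
  proof -
    have "r^3 = r * r^2" by (simp add: power2_eq_square power3_eq_cube)
    also have "\<dots> \<le> 2 * r^2" using r by (intro mult_right_mono) auto
    finally show ?thesis using t by (simp add: t_def)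
  qed
  have t1: "\<bar>t * snd (uu X)\<bar> \<le> r^2/10^3" "\<bar>t * fst (uu X)\<bar> \<le> r^2/10^3"
  proof -
    have "\<bar>t\<bar> * \<bar>snd (uu X)\<bar> \<le> \<bar>t\<bar>" "\<bar>t\<bar> * \<bar>fst (uu X)\<bar> \<le> \<bar>t\<bar>"
      using u1 by (simp_all add: mult_right_le_one_le)
    then show "\<bar>t * snd (uu X)\<bar> \<le> r^2/10^3" "\<bar>t * fst (uu X)\<bar> \<le> r^2/10^3"
      using tb by (simp_all add: abs_mult)
  qed
  have m1: "min (fst X) (1/2) \<le> fst X + lam * (1/2 - fst X)" "fst X + lam * (1/2 - fst X) \<le> max (fst X) (1/2)"
    "min (snd X) (1/2) \<le> snd X + lam * (1/2 - snd X)" "snd X + lam * (1/2 - snd X) \<le> max (snd X) (1/2)"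
    using interp[OF l01] by auto
  have r3: "r^2/10^3 \<le> 1/2" using r2 r by simp
  have mm: "r^2/10^3 \<le> min (fst X) (1/2)" "max (fst X) (1/2) \<le> 1 - r^2/10^3"
    "r^2/10^3 \<le> min (snd X) (1/2)" "max (snd X) (1/2) \<le> 1 - r^2/10^3"
    using bd r3 by auto
  have "0 \<le> fst q" "fst q \<le> 1" "0 \<le> snd q" "snd q \<le> 1"
    using qx qy m1 mm t1 unfolding abs_le_iff by linarith+
  then show ?thesis unfolding unit_sq_def by (simp add: mem_Times_iff)
qed



lemma shear_sets1: "{q::real\<times>real. \<bar>fst q - a\<bar> \<le> \<alpha> \<and> \<bar>snd q - b - m * (fst q - a)\<bar> \<le> \<beta>} \<in> sets borel"
  by (intro borel_closed closed_Collect_conj closed_Collect_le continuous_intros)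

lemma shear_sets2: "{q::real\<times>real. \<bar>snd q - b\<bar> \<le> \<alpha> \<and> \<bar>fst q - a - m * (snd q - b)\<bar> \<le> \<beta>} \<in> sets borel"
  by (intro borel_closed closed_Collect_conj closed_Collect_le continuous_intros)

lemma shear_measure1:
  assumes "0 \<le> \<alpha>" "0 \<le> \<beta>"
  shows "emeasure lborel {q::real\<times>real. \<bar>fst q - a\<bar> \<le> \<alpha> \<and> \<bar>snd q - b - m * (fst q - a)\<bar> \<le> \<beta>}
       = ennreal (4 * \<alpha> * \<beta>)"
proof -
  let ?S = "{q::real\<times>real. \<bar>fst q - a\<bar> \<le> \<alpha> \<and> \<bar>snd q - b - m * (fst q - a)\<bar> \<le> \<beta>}"
  have S: "?S \<in> sets (lborel \<Otimes>\<^sub>M lborel)" unfolding lborel_prod using shear_sets1 by simp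
  have sl: "Pair x -` ?S = (if \<bar>x - a\<bar> \<le> \<alpha> then {b + m * (x - a) - \<beta> .. b + m * (x - a) + \<beta>} else {})" for x
    by (auto simp: abs_le_iff)
  have "emeasure lborel ?S = emeasure (lborel \<Otimes>\<^sub>M lborel) ?S" by (simp add: lborel_prod)
  also have "\<dots> = (\<integral>\<^sup>+x. emeasure lborel (Pair x -` ?S) \<partial>lborel)"
    by (rule lborel.emeasure_pair_measure_alt[OF S])
  also have "\<dots> = (\<integral>\<^sup>+x. ennreal (2 * \<beta>) * indicator {a - \<alpha> .. a + \<alpha>} x \<partial>lborel)"
    by (intro nn_integral_cong, subst sl) (auto simp: indicator_def assms)
  also have "\<dots> = ennreal (2 * \<beta>) * emeasure lborel {a - \<alpha> .. a + \<alpha>}"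
    by (rule nn_integral_cmult_indicator) simp
  also have "\<dots> = ennreal (4 * \<alpha> * \<beta>)"
    using assms by (simp add: ennreal_mult[symmetric])
  finally show ?thesis .
qed

lemma shear_measure2:
  assumes "0 \<le> \<alpha>" "0 \<le> \<beta>"
  shows "emeasure lborel {q::real\<times>real. \<bar>snd q - b\<bar> \<le> \<alpha> \<and> \<bar>fst q - a - m * (snd q - b)\<bar> \<le> \<beta>}
       = ennreal (4 * \<alpha> * \<beta>)"
proof -
  let ?S = "{q::real\<times>real. \<bar>snd q - b\<bar> \<le> \<alpha> \<and> \<bar>fst q - a - m * (snd q - b)\<bar> \<le> \<beta>}"
  have S: "?S \<in> sets (lborel \<Otimes>\<^sub>M lborel)" unfolding lborel_prod using shear_sets2 by simp
  have sl: "(\<lambda>x. (x, y)) -` ?S = (if \<bar>y - b\<bar> \<le> \<alpha> then {a + m * (y - b) - \<beta> .. a + m * (y - b) + \<beta>} else {})" for y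
    by (auto simp: abs_le_iff)
  have "emeasure lborel ?S = emeasure (lborel \<Otimes>\<^sub>M lborel) ?S" by (simp add: lborel_prod)
  also have "\<dots> = (\<integral>\<^sup>+y. emeasure lborel ((\<lambda>x. (x, y)) -` ?S) \<partial>lborel)"
    by (rule lborel_pair.emeasure_pair_measure_alt2[OF S])
  also have "\<dots> = (\<integral>\<^sup>+y. ennreal (2 * \<beta>) * indicator {b - \<alpha> .. b + \<alpha>} y \<partial>lborel)"
    by (intro nn_integral_cong, subst sl) (auto simp: indicator_def assms)
  also have "\<dots> = ennreal (2 * \<beta>) * emeasure lborel {b - \<alpha> .. b + \<alpha>}"
    by (rule nn_integral_cmult_indicator) simp
  also have "\<dots> = ennreal (4 * \<alpha> * \<beta>)"
    using assms by (simp add: ennreal_mult[symmetric])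
  finally show ?thesis .
qed

definition tbox :: "real \<Rightarrow> real \<times> real \<Rightarrow> (real \<times> real) set" where
  "tbox r Y = (let u = uu Y; C = Y + (3/4*(r^2/100)) *\<^sub>R u; al = r^2/100/16; be = r^3/10^5/8 in
     if \<bar>snd u\<bar> \<le> \<bar>fst u\<bar>
     then {q. \<bar>fst q - fst C\<bar> \<le> al \<and> \<bar>snd q - snd C - snd u / fst u * (fst q - fst C)\<bar> \<le> be}
     else {q. \<bar>snd q - snd C\<bar> \<le> al \<and> \<bar>fst q - fst C - fst u / snd u * (snd q - snd C)\<bar> \<le> be})"

lemma tbox_sets: "tbox r Y \<in> sets borel"
  unfolding tbox_def Let_def
  apply (split if_split, intro conjI impI)
   apply (rule shear_sets1)
  apply (rule shear_sets2)
  done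

lemma tbox_measure:
  assumes "r > 0"
  shows "emeasure lborel (tbox r Y) = ennreal (r^5 / (32 * 10^7))"
proof -
  have e: "4 * (r^2/100/16) * (r^3/10^5/8) = r^5/(32*10^7)"
    by (simp add: power_add[symmetric] field_simps)
  have "emeasure lborel (tbox r Y) = ennreal (4 * (r^2/100/16) * (r^3/10^5/8))"
    unfolding tbox_def Let_def
    apply (split if_split, intro conjI impI)
     apply (rule shear_measure1; use assms in simp)
    apply (rule shear_measure2; use assms in simp)
    done
  then show ?thesis by (simp only: e)
qed

lemma big_coord:
  fixes x y :: real
  assumes "x^2 + y^2 = 1" "\<bar>y\<bar> \<le> \<bar>x\<bar>"
  shows "\<bar>x\<bar> \<ge> 2/3"
proof (rule ccontr)
  assume "\<not> ?thesis"
  then have "\<bar>x\<bar> < 2/3" by simp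
  then have "x^2 < 4/9" using power_strict_mono[of "\<bar>x\<bar>" "2/3" 2] by (simp add: power_divide)
  moreover have "y^2 \<le> x^2" using assms(2) by (metis abs_le_square_iff)
  ultimately show False using assms(1) by linarith
qed

lemma tbox_sub:
  assumes d: "dist Y centre > 0" and r: "0 < r" "r \<le> 3/2" and q: "q \<in> tbox r Y"
  shows "\<bar>inner (q - (Y + (3/4*(r^2/100)) *\<^sub>R uu Y)) (uu Y)\<bar> \<le> r^2/100/8
       \<and> \<bar>inner (q - (Y + (3/4*(r^2/100)) *\<^sub>R uu Y)) (vv Y)\<bar> \<le> r^3/10^5/8"
proof -
  define C where "C = Y + (3/4*(r^2/100)) *\<^sub>R uu Y"
  define ux where "ux = fst (uu Y)"
  define uy where "uy = snd (uu Y)"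
  define al where "al = r^2/100/16"
  define be where "be = r^3/10^5/8"
  have n: "ux^2 + uy^2 = 1" using uu_norm[OF d] by (simp add: ux_def uy_def)
  have be0: "be \<ge> 0" using r by (simp add: be_def)
  have ab: "3/2 * al + be \<le> r^2/100/8"
  proof -
    have "r^3 = r * r^2" by (simp add: power2_eq_square power3_eq_cube)
    also have "\<dots> \<le> 2 * r^2" using r by (intro mult_right_mono) auto
    finally have "r^3 \<le> 2 * r^2" .
    then have "r^3/10^5/8 \<le> 2 * r^2/10^5/8" by (simp add: divide_right_mono)
    moreover have "3/2 * (r^2/100/16) + 2 * r^2/10^5/8 \<le> r^2/100/8" by simp
    ultimately show ?thesis unfolding al_def be_def by linarith
  qed
  have inu: "inner (q - C) (uu Y) = (fst q - fst C) * ux + (snd q - snd C) * uy"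
    by (simp add: inner_prod_def ux_def uy_def)
  have inv: "inner (q - C) (vv Y) = - (fst q - fst C) * uy + (snd q - snd C) * ux"
    by (simp add: inner_prod_def ux_def uy_def vv_def algebra_simps)
  have ux1: "\<bar>ux\<bar> \<le> 1" "\<bar>uy\<bar> \<le> 1"
  proof -
    have "ux^2 \<le> 1" "uy^2 \<le> 1" using n zero_le_power2[of ux] zero_le_power2[of uy] by linarith+
    then show "\<bar>ux\<bar> \<le> 1" "\<bar>uy\<bar> \<le> 1" by (simp_all add: abs_square_le_1)
  qed
  have "\<bar>inner (q - C) (uu Y)\<bar> \<le> r^2/100/8 \<and> \<bar>inner (q - C) (vv Y)\<bar> \<le> r^3/10^5/8"
  proof (cases "\<bar>uy\<bar> \<le> \<bar>ux\<bar>")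
    case True
    have ux0: "\<bar>ux\<bar> \<ge> 2/3" using big_coord[OF n True] .
    then have ux0': "ux \<noteq> 0" by auto
    define \<xi> where "\<xi> = fst q - fst C"
    define \<eta> where "\<eta> = snd q - snd C - uy / ux * \<xi>"
    have "q \<in> {q. \<bar>fst q - fst C\<bar> \<le> al \<and> \<bar>snd q - snd C - uy / ux * (fst q - fst C)\<bar> \<le> be}"
      using q True unfolding tbox_def Let_def C_def[symmetric] ux_def[symmetric] uy_def[symmetric]
        al_def[symmetric] be_def[symmetric] by (simp only: if_True)
    then have qb: "\<bar>\<xi>\<bar> \<le> al" "\<bar>\<eta>\<bar> \<le> be" unfolding \<xi>_def \<eta>_def by simp_all
    have e1: "inner (q - C) (uu Y) = \<xi> / ux + \<eta> * uy"
    proof -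
      have "inner (q - C) (uu Y) = \<xi> * ux + (uy / ux * \<xi> + \<eta>) * uy"
        by (simp add: inu \<xi>_def \<eta>_def)
      also have "\<dots> = \<xi> * (ux^2 + uy^2) / ux + \<eta> * uy" using ux0'
        by (simp add: field_simps power2_eq_square)
      finally show ?thesis using n by simp
    qed
    have e2: "inner (q - C) (vv Y) = \<eta> * ux"
    proof -
      have "inner (q - C) (vv Y) = - \<xi> * uy + (uy / ux * \<xi> + \<eta>) * ux"
        by (simp add: inv \<xi>_def \<eta>_def)
      also have "\<dots> = \<eta> * ux" using ux0' by (simp add: field_simps)
      finally show ?thesis .
    qed
    have b1: "\<bar>\<xi> / ux\<bar> \<le> 3/2 * al"
    proof -
      have "\<bar>\<xi> / ux\<bar> = \<bar>\<xi>\<bar> / \<bar>ux\<bar>" by (simp add: abs_divide)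
      also have "\<dots> \<le> al / (2/3)" using qb ux0 by (intro frac_le) auto
      finally show ?thesis by simp
    qed
    have b2: "\<bar>\<eta> * uy\<bar> \<le> be" "\<bar>\<eta> * ux\<bar> \<le> be"
      using qb ux1 by (simp_all add: abs_mult mult_le_one order_trans[OF mult_right_le_one_le]
          mult_right_le_one_le)
    have "\<bar>\<xi> / ux + \<eta> * uy\<bar> \<le> \<bar>\<xi> / ux\<bar> + \<bar>\<eta> * uy\<bar>" by (rule abs_triangle_ineq)
    then have "\<bar>inner (q - C) (uu Y)\<bar> \<le> r^2/100/8" using e1 b1 b2 ab by linarith
    moreover have "\<bar>inner (q - C) (vv Y)\<bar> \<le> r^3/10^5/8" using e2 b2 by (simp add: be_def)
    ultimately show ?thesis by simp
  next
    case False
    have Tr: "\<bar>ux\<bar> \<le> \<bar>uy\<bar>" using False by simp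
    have n': "uy^2 + ux^2 = 1" using n by simp
    have uy0: "\<bar>uy\<bar> \<ge> 2/3" using big_coord[OF n' Tr] .
    then have uy0': "uy \<noteq> 0" by auto
    define \<xi> where "\<xi> = snd q - snd C"
    define \<eta> where "\<eta> = fst q - fst C - ux / uy * \<xi>"
    have "q \<in> {q. \<bar>snd q - snd C\<bar> \<le> al \<and> \<bar>fst q - fst C - ux / uy * (snd q - snd C)\<bar> \<le> be}"
      using q False unfolding tbox_def Let_def C_def[symmetric] ux_def[symmetric] uy_def[symmetric]
        al_def[symmetric] be_def[symmetric] by (simp only: if_False)
    then have qb: "\<bar>\<xi>\<bar> \<le> al" "\<bar>\<eta>\<bar> \<le> be" unfolding \<xi>_def \<eta>_def by simp_all
    have e1: "inner (q - C) (uu Y) = \<xi> / uy + \<eta> * ux"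
    proof -
      have "inner (q - C) (uu Y) = (ux / uy * \<xi> + \<eta>) * ux + \<xi> * uy"
        by (simp add: inu \<xi>_def \<eta>_def)
      also have "\<dots> = \<xi> * (ux^2 + uy^2) / uy + \<eta> * ux" using uy0'
        by (simp add: field_simps power2_eq_square)
      finally show ?thesis using n by simp
    qed
    have e2: "inner (q - C) (vv Y) = - (\<eta> * uy)"
    proof -
      have "inner (q - C) (vv Y) = - (ux / uy * \<xi> + \<eta>) * uy + \<xi> * ux"
        by (simp add: inv \<xi>_def \<eta>_def)
      also have "\<dots> = - (\<eta> * uy)" using uy0' by (simp add: field_simps)
      finally show ?thesis .
    qed
    have b1: "\<bar>\<xi> / uy\<bar> \<le> 3/2 * al"
    proof -
      have "\<bar>\<xi> / uy\<bar> = \<bar>\<xi>\<bar> / \<bar>uy\<bar>" by (simp add: abs_divide)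
      also have "\<dots> \<le> al / (2/3)" using qb uy0 by (intro frac_le) auto
      finally show ?thesis by simp
    qed
    have b2: "\<bar>\<eta> * uy\<bar> \<le> be" "\<bar>\<eta> * ux\<bar> \<le> be"
      using qb ux1 by (simp_all add: abs_mult mult_le_one order_trans[OF mult_right_le_one_le]
          mult_right_le_one_le)
    have "\<bar>\<xi> / uy + \<eta> * ux\<bar> \<le> \<bar>\<xi> / uy\<bar> + \<bar>\<eta> * ux\<bar>" by (rule abs_triangle_ineq)
    then have "\<bar>inner (q - C) (uu Y)\<bar> \<le> r^2/100/8" using e1 b1 b2 ab by linarith
    moreover have "\<bar>inner (q - C) (vv Y)\<bar> \<le> r^3/10^5/8" using e2 b2 by (simp add: be_def)
    ultimately show ?thesis by simp
  qed
  then show ?thesis by (simp add: C_def)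
qed



abbreviation U :: "(real \<times> real) measure" where
  "U \<equiv> uniform_measure lborel unit_sq"

lemma unit_sq_sets: "unit_sq \<in> sets borel"
  unfolding unit_sq_def by (intro borel_closed closed_Times) auto

lemma emeasure_unit_sq: "emeasure lborel unit_sq = 1"
proof -
  have "emeasure lborel unit_sq = emeasure (lborel \<Otimes>\<^sub>M lborel) ({0..1::real} \<times> {0..1::real})"
    by (simp add: lborel_prod unit_sq_def)
  also have "\<dots> = emeasure lborel {0..1::real} * emeasure lborel {0..1::real}"
    by (rule lborel.emeasure_pair_measure_Times) auto
  also have "\<dots> = 1" by simp
  finally show ?thesis .
qed

lemma prob_U: "prob_space U"
  by (rule prob_space_uniform_measure) (simp_all add: emeasure_unit_sq)

lemma measure_U:
  assumes "S \<in> sets borel" "S \<subseteq> unit_sq"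
  shows "measure U S = measure lborel S"
proof -
  have "measure U S = measure lborel (unit_sq \<inter> S) / measure lborel unit_sq"
    by (rule measure_uniform_measure) (simp_all add: emeasure_unit_sq assms)
  also have "\<dots> = measure lborel S"
    using assms emeasure_unit_sq by (simp add: Int_absorb1 measure_def)
  finally show ?thesis .
qed

lemma rgg_prob: "prob_space (rgg_space n)"
  unfolding rgg_space_def by (intro prob_space_PiM prob_U)

lemma avoid_prob:
  assumes S: "S \<in> sets borel" "S \<subseteq> unit_sq"
  shows "measure (rgg_space n) {\<omega> \<in> space (rgg_space n). \<forall>i<n. \<omega> i \<notin> S} = (1 - measure lborel S) ^ n"
proof -
  interpret P: finite_product_prob_space "\<lambda>_. U" "{..<n}"
    by (intro finite_product_prob_space.intro finite_product_sigma_finite.intro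
        product_prob_space.intro product_sigma_finite.intro finite_product_sigma_finite_axioms.intro product_prob_space_axioms.intro)
      (auto intro: prob_U prob_space_imp_sigma_finite)
  have eq: "{\<omega> \<in> space (rgg_space n). \<forall>i<n. \<omega> i \<notin> S} = (\<Pi>\<^sub>E i\<in>{..<n}. - S)"
    unfolding rgg_space_def by (auto simp: space_PiM PiE_def Pi_def)
  have "measure (rgg_space n) {\<omega> \<in> space (rgg_space n). \<forall>i<n. \<omega> i \<notin> S}
      = P.prob (\<Pi>\<^sub>E i\<in>{..<n}. - S)" unfolding eq by (simp add: rgg_space_def)
  also have "\<dots> = (\<Prod>i\<in>{..<n}. measure U (- S))"
    by (rule P.prob_times) (use S in auto)
  also have "measure U (- S) = 1 - measure U S"
  proof -
    have "measure U (space U - S) = 1 - measure U S" by (rule prob_space.prob_compl[OF prob_U]) (use S in simp)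
    then show ?thesis by (simp add: Compl_eq_Diff_UNIV)
  qed
  finally show ?thesis using measure_U[OF S] by simp
qed



lemma tri_closed: "closed (tri r X)"
  unfolding tri_eq by (intro compact_imp_closed compact_convex_hull finite_imp_compact) simp

lemma tri_open:
  assumes d: "dist X centre > 0" and p: "p \<notin> tri r X"
  shows "\<exists>e>0. \<forall>X'. dist X' X < e \<longrightarrow> p \<notin> tri r X'"
proof -
  have ne: "tri r X \<noteq> {}" unfolding tri_eq by simp
  define \<delta> where "\<delta> = infdist p (tri r X)"
  have dp: "\<delta> > 0" unfolding \<delta>_def by (rule infdist_pos_not_in_closed[OF tri_closed ne p])
  have d0: "dist X centre \<noteq> 0" using d by simp
  have c1: "continuous (at X) (B1 r)" unfolding B1_def vv_def uu_def
    by (intro continuous_intros) (use d0 in auto)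
  have c2: "continuous (at X) (B2 r)" unfolding B2_def vv_def uu_def
    by (intro continuous_intros) (use d0 in auto)
  obtain e1 where e1: "e1 > 0" "\<And>X'. dist X' X < e1 \<Longrightarrow> dist (B1 r X') (B1 r X) < \<delta>"
    using c1 dp unfolding continuous_at_eps_delta by blast
  obtain e2 where e2: "e2 > 0" "\<And>X'. dist X' X < e2 \<Longrightarrow> dist (B2 r X') (B2 r X) < \<delta>"
    using c2 dp unfolding continuous_at_eps_delta by blast
  define e where "e = min \<delta> (min e1 e2)"
  have "e > 0" using dp e1 e2 by (simp add: e_def)
  moreover have "p \<notin> tri r X'" if X': "dist X' X < e" for X'
  proof
    assume "p \<in> tri r X'"
    then obtain a b c where abc: "0 \<le> a" "0 \<le> b" "0 \<le> c" "a + b + c = 1"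
      and pe: "p = a *\<^sub>R X' + b *\<^sub>R B1 r X' + c *\<^sub>R B2 r X'"
      unfolding tri_eq convex_hull_3 by blast
    define q where "q = a *\<^sub>R X + b *\<^sub>R B1 r X + c *\<^sub>R B2 r X"
    have qin: "q \<in> tri r X" unfolding tri_eq convex_hull_3 q_def using abc by blast
    define m where "m = max (dist X' X) (max (dist (B1 r X') (B1 r X)) (dist (B2 r X') (B2 r X)))"
    have m: "m < \<delta>" using X' e1(2)[of X'] e2(2)[of X'] by (simp add: m_def e_def)
    have "dist p q = norm (a *\<^sub>R (X' - X) + b *\<^sub>R (B1 r X' - B1 r X) + c *\<^sub>R (B2 r X' - B2 r X))"
      by (simp add: pe q_def dist_norm algebra_simps)
    also have "\<dots> \<le> norm (a *\<^sub>R (X' - X)) + norm (b *\<^sub>R (B1 r X' - B1 r X)) + norm (c *\<^sub>R (B2 r X' - B2 r X))"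
      by (rule norm_triangle_le) (rule add_mono[OF norm_triangle_ineq order_refl])
    also have "\<dots> = a * dist X' X + b * dist (B1 r X') (B1 r X) + c * dist (B2 r X') (B2 r X)"
      using abc by (simp add: dist_norm)
    also have "\<dots> \<le> a * m + b * m + c * m"
      using abc by (intro add_mono mult_left_mono) (auto simp: m_def)
    also have "\<dots> = m" using abc by (simp add: distrib_right[symmetric])
    finally have "dist p q < \<delta>" using m by simp
    moreover have "\<delta> \<le> dist p q" unfolding \<delta>_def by (rule infdist_le[OF qin])
    ultimately show False by simp
  qed
  ultimately show ?thesis by blast
qed

lemma event_sets:
  assumes r: "r > 0"
  shows "{\<omega> \<in> space (rgg_space n). \<forall>X. admissible r X \<longrightarrow> (\<exists>i<n. \<omega> i \<in> tri r X)} \<in> sets (rgg_space n)"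
proof -
  define K where "K = {X. admissible r X}"
  obtain D where D: "countable D" "D \<subseteq> K" "K \<subseteq> closure D" using separable[of K] by blast
  have Kd: "dist X centre > 0" if "X \<in> K" for X
  proof -
    have "r/2 \<le> dist X centre" using that by (simp add: K_def admissible_def)
    then show ?thesis using r by linarith
  qed
  define A where "A = (\<lambda>X. {\<omega> \<in> space (rgg_space n). \<exists>i<n. \<omega> i \<in> tri r X})"
  have A: "A X \<in> sets (rgg_space n)" for X
  proof -
    have "A X = (\<Union>i<n. (\<lambda>\<omega>. \<omega> i) -` tri r X \<inter> space (rgg_space n))" by (auto simp: A_def)
    also have "\<dots> \<in> sets (rgg_space n)"
    proof (intro sets.finite_UN)
      fix i assume "i \<in> {..<n}"
      then have "(\<lambda>\<omega>. \<omega> i) \<in> measurable (rgg_space n) U"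
        unfolding rgg_space_def by (rule measurable_component_singleton)
      moreover have "tri r X \<in> sets U" using tri_closed by simp
      ultimately show "(\<lambda>\<omega>. \<omega> i) -` tri r X \<inter> space (rgg_space n) \<in> sets (rgg_space n)"
        by (rule measurable_sets)
    qed auto
    finally show ?thesis .
  qed
  have eq: "{\<omega> \<in> space (rgg_space n). \<forall>X. admissible r X \<longrightarrow> (\<exists>i<n. \<omega> i \<in> tri r X)}
     = {\<omega> \<in> space (rgg_space n). \<forall>X\<in>D. \<exists>i<n. \<omega> i \<in> tri r X}" (is "?L = ?R")
  proof
    show "?L \<subseteq> ?R" using D(2) by (auto simp: K_def)
  next
    show "?R \<subseteq> ?L"
    proof (rule subsetI, rule ccontr)
      fix \<omega> assume w: "\<omega> \<in> ?R" "\<omega> \<notin> ?L"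
      then obtain X where X: "X \<in> K" "\<forall>i<n. \<omega> i \<notin> tri r X" by (auto simp: K_def)
      have "\<forall>i\<in>{..<n}. \<exists>e>0. \<forall>X'. dist X' X < e \<longrightarrow> \<omega> i \<notin> tri r X'"
        using tri_open[OF Kd[OF X(1)]] X(2) by blast
      then have ev: "\<forall>i\<in>{..<n}. eventually (\<lambda>X'. \<omega> i \<notin> tri r X') (nhds X)"
        by (auto simp: eventually_nhds_metric)
      have "eventually (\<lambda>X'. \<forall>i\<in>{..<n}. \<omega> i \<notin> tri r X') (nhds X)"
        using ev by (simp add: eventually_ball_finite)
      then obtain e where e: "e > 0" "\<And>X'. dist X' X < e \<Longrightarrow> \<forall>i<n. \<omega> i \<notin> tri r X'"
        by (auto simp: eventually_nhds_metric)
      obtain X' where "X' \<in> D" "dist X' X < e"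
        using closure_approachable[of X D] D(3) X(1) e(1) by blast
      then show False using e(2) w(1) by blast
    qed
  qed
  show ?thesis
  proof (cases "D = {}")
    case True
    then show ?thesis unfolding eq by simp
  next
    case False
    have "?R = space (rgg_space n) \<inter> (\<Inter>X\<in>D. A X)"
      using False unfolding A_def by blast
    also have "\<dots> \<in> sets (rgg_space n)"
    proof (rule sets.Int[OF sets.top sets.countable_INT'[OF D(1) False]])
      show "A ` D \<subseteq> sets (rgg_space n)" using A by blast
    qed
    finally show ?thesis unfolding eq .
  qed
qed



definition grid :: "real \<Rightarrow> (real \<times> real) set" where
  "grid \<delta> = (\<lambda>(i, j). (real i * \<delta>, real j * \<delta>)) ` ({0..nat \<lceil>1/\<delta>\<rceil>} \<times> {0..nat \<lceil>1/\<delta>\<rceil>})"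

lemma grid_finite: "finite (grid \<delta>)"
  unfolding grid_def by simp

lemma grid_card: "card (grid \<delta>) \<le> (nat \<lceil>1/\<delta>\<rceil> + 1)^2"
proof -
  have "card (grid \<delta>) \<le> card ({0..nat \<lceil>1/\<delta>\<rceil>} \<times> {0..nat \<lceil>1/\<delta>\<rceil>})"
    unfolding grid_def by (rule card_image_le) simp
  also have "\<dots> = (nat \<lceil>1/\<delta>\<rceil> + 1)^2" by (simp add: card_cartesian_product power2_eq_square)
  finally show ?thesis .
qed

lemma round_coord:
  assumes d: "\<delta> > 0" and x: "0 \<le> x" "x \<le> 1"
  shows "\<exists>i\<in>{0..nat \<lceil>1/\<delta>\<rceil>}. \<bar>x - real i * \<delta>\<bar> \<le> \<delta>/2"
proof -
  define k where "k = \<lfloor>x/\<delta> + 1/2\<rfloor>"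
  have k0: "k \<ge> 0" using d x by (simp add: k_def)
  have k1: "real_of_int k \<le> x/\<delta> + 1/2" "x/\<delta> + 1/2 < real_of_int k + 1" unfolding k_def by linarith+
  have "x/\<delta> \<le> 1/\<delta>" using d x by (simp add: divide_right_mono)
  then have "k \<le> \<lceil>1/\<delta>\<rceil>" using k1 by linarith
  then have kn: "nat k \<in> {0..nat \<lceil>1/\<delta>\<rceil>}" using k0 by simp
  have rk: "real (nat k) = real_of_int k" using k0 by simp
  have "\<bar>x/\<delta> - real (nat k)\<bar> \<le> 1/2" unfolding rk abs_le_iff using k1 by linarith
  then have "\<bar>x/\<delta> - real (nat k)\<bar> * \<delta> \<le> 1/2 * \<delta>" using d by (intro mult_right_mono) auto
  moreover have "\<bar>x/\<delta> - real (nat k)\<bar> * \<delta> = \<bar>x - real (nat k) * \<delta>\<bar>"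
  proof -
    have "x - real (nat k) * \<delta> = (x/\<delta> - real (nat k)) * \<delta>" using d by (simp add: field_simps)
    then show ?thesis using d by (simp add: abs_mult)
  qed
  ultimately show ?thesis using kn by (intro bexI[of _ "nat k"]) auto
qed

lemma near_grid:
  assumes d: "\<delta> > 0" and X: "X \<in> unit_sq"
  shows "\<exists>Y\<in>grid \<delta>. dist X Y \<le> \<delta>"
proof -
  obtain i where i: "i \<in> {0..nat \<lceil>1/\<delta>\<rceil>}" "\<bar>fst X - real i * \<delta>\<bar> \<le> \<delta>/2"
    using round_coord[OF d, of "fst X"] X by (auto simp: unit_sq_def mem_Times_iff)
  obtain j where j: "j \<in> {0..nat \<lceil>1/\<delta>\<rceil>}" "\<bar>snd X - real j * \<delta>\<bar> \<le> \<delta>/2"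
    using round_coord[OF d, of "snd X"] X by (auto simp: unit_sq_def mem_Times_iff)
  define Y where "Y = (real i * \<delta>, real j * \<delta>)"
  have Y: "Y \<in> grid \<delta>" unfolding grid_def Y_def using i(1) j(1) by (intro image_eqI[of _ _ "(i,j)"]) auto
  have sq: "(fst X - real i * \<delta>)^2 \<le> (\<delta>/2)^2" "(snd X - real j * \<delta>)^2 \<le> (\<delta>/2)^2"
    using power_mono[OF i(2) abs_ge_zero, of 2] power_mono[OF j(2) abs_ge_zero, of 2] by simp_all
  have "(fst X - real i * \<delta>)^2 + (snd X - real j * \<delta>)^2 \<le> \<delta>^2"
  proof -
    have "(fst X - real i * \<delta>)^2 * 4 \<le> \<delta>^2" "(snd X - real j * \<delta>)^2 * 4 \<le> \<delta>^2"
      using sq by (simp_all add: power_divide)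
    then show ?thesis using zero_le_power2[of \<delta>] by linarith
  qed
  then have "sqrt ((fst X - real i * \<delta>)^2 + (snd X - real j * \<delta>)^2) \<le> sqrt (\<delta>^2)"
    by (rule real_sqrt_le_mono)
  then have "dist X Y \<le> sqrt (\<delta>^2)"
    by (simp add: dist_prod_def dist_real_def Y_def del: real_sqrt_abs)
  then have "dist X Y \<le> \<delta>" using d by simp
  then show ?thesis using Y by blast
qed



lemma exists_sets:
  assumes S: "S \<in> sets borel"
  shows "{\<omega> \<in> space (rgg_space n). \<exists>i<n. \<omega> i \<in> S} \<in> sets (rgg_space n)"
proof -
  have "{\<omega> \<in> space (rgg_space n). \<exists>i<n. \<omega> i \<in> S} = (\<Union>i<n. (\<lambda>\<omega>. \<omega> i) -` S \<inter> space (rgg_space n))"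
    by auto
  also have "\<dots> \<in> sets (rgg_space n)"
  proof (intro sets.finite_UN)
    fix i assume "i \<in> {..<n}"
    then have "(\<lambda>\<omega>. \<omega> i) \<in> measurable (rgg_space n) U"
      unfolding rgg_space_def by (rule measurable_component_singleton)
    moreover have "S \<in> sets U" using S by simp
    ultimately show "(\<lambda>\<omega>. \<omega> i) -` S \<inter> space (rgg_space n) \<in> sets (rgg_space n)"
      by (rule measurable_sets)
  qed auto
  finally show ?thesis .
qed

lemma avoid_sets:
  assumes S: "S \<in> sets borel"
  shows "{\<omega> \<in> space (rgg_space n). \<forall>i<n. \<omega> i \<notin> S} \<in> sets (rgg_space n)"
proof -
  have "{\<omega> \<in> space (rgg_space n). \<forall>i<n. \<omega> i \<notin> S}
      = space (rgg_space n) - {\<omega> \<in> space (rgg_space n). \<exists>i<n. \<omega> i \<in> S}" by auto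
  also have "\<dots> \<in> sets (rgg_space n)" by (rule sets.Diff[OF sets.top exists_sets[OF S]])
  finally show ?thesis .
qed

lemma Y_far:
  assumes r: "0 < r" "r \<le> 3/2" and X: "admissible r X" and dXY: "dist X Y \<le> r^3/(16*10^5)"
  shows "dist Y centre > 0"
proof -
  have "r^3 = r * r^2" by (simp add: power2_eq_square power3_eq_cube)
  also have "\<dots> \<le> r * (3/2)^2" using r by (intro mult_left_mono power_mono) auto
  also have "\<dots> \<le> r * 400000" using r by (intro mult_left_mono) (auto simp: power2_eq_square)
  finally have "r^3/(16*10^5) \<le> r/4" by simp
  then have d4: "dist X Y \<le> r/4" using dXY by linarith
  have dX: "r/2 \<le> dist X centre" using X by (simp add: admissible_def)
  have "dist X centre \<le> dist X Y + dist Y centre" by (rule dist_triangle)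
  then show ?thesis using d4 dX r by linarith
qed

lemma tbox_good:
  assumes r: "0 < r" "r \<le> 3/2" and X: "admissible r X" and dXY: "dist X Y \<le> r^3/(16*10^5)"
  shows "tbox r Y \<subseteq> unit_sq \<inter> tri r X"
proof
  fix q assume q: "q \<in> tbox r Y"
  have dY: "dist Y centre > 0" by (rule Y_far[OF r X dXY])
  have dX: "dist X centre > 0"
  proof -
    have "r/2 \<le> dist X centre" using X by (simp add: admissible_def)
    then show ?thesis using r by linarith
  qed
  note b = tbox_sub[OF dY r q]
  have c: "r^2/100/2 \<le> inner (q - X) (uu X) \<and> inner (q - X) (uu X) \<le> r^2/100
       \<and> \<bar>inner (q - X) (vv X)\<bar> \<le> r^3/10^5/4"
    using b by (intro contain[OF r X dXY]) auto
  have "q \<in> tri r X" using c by (intro tri_mem'[OF dX r(1)]) auto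
  moreover have "q \<in> unit_sq"
  proof (rule in_square[OF r X])
    have "0 \<le> r^2/100/2" by simp
    then show "0 \<le> inner (q - X) (uu X)" using c by linarith
  qed (use c in auto)
  ultimately show "q \<in> unit_sq \<inter> tri r X" by simp
qed

lemma bound_n:
  assumes r: "0 < r" "r \<le> 3/2"
  shows "measure (rgg_space n)
           {\<omega> \<in> space (rgg_space n). \<forall>X. admissible r X \<longrightarrow> (\<exists>i<n. \<omega> i \<in> tri r X)}
         \<ge> 1 - real (card (grid (r^3/(16*10^5)))) * (1 - r^5/(32*10^7))^n"
proof -
  define \<delta> where "\<delta> = r^3/(16*10^5)"
  have dpos: "\<delta> > 0" using r by (simp add: \<delta>_def)
  define Ev where "Ev = {\<omega> \<in> space (rgg_space n). \<forall>X. admissible r X \<longrightarrow> (\<exists>i<n. \<omega> i \<in> tri r X)}"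
  define Net where "Net = {Y \<in> grid \<delta>. \<exists>X. admissible r X \<and> dist X Y \<le> \<delta>}"
  define Fs where "Fs = (\<lambda>Y. {\<omega> \<in> space (rgg_space n). \<forall>i<n. \<omega> i \<notin> tbox r Y})"
  define p where "p = 1 - r^5/(32*10^7)"
  interpret P: prob_space "rgg_space n" by (rule rgg_prob)
  have Evs: "Ev \<in> sets (rgg_space n)" unfolding Ev_def by (rule event_sets[OF r(1)])
  have finN: "finite Net" using grid_finite[of \<delta>] by (simp add: Net_def)
  have Fss: "Fs Y \<in> sets (rgg_space n)" for Y unfolding Fs_def by (rule avoid_sets[OF tbox_sets])
  have sub: "space (rgg_space n) - Ev \<subseteq> (\<Union>Y\<in>Net. Fs Y)"
  proof
    fix \<omega> assume w: "\<omega> \<in> space (rgg_space n) - Ev"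
    then obtain X where X: "admissible r X" "\<forall>i<n. \<omega> i \<notin> tri r X" by (auto simp: Ev_def)
    have "X \<in> unit_sq" using X(1) by (simp add: admissible_def)
    then obtain Y where Y: "Y \<in> grid \<delta>" "dist X Y \<le> \<delta>" using near_grid[OF dpos] by blast
    have YN: "Y \<in> Net" using X(1) Y unfolding Net_def by blast
    have "tbox r Y \<subseteq> tri r X" using tbox_good[OF r X(1)] Y(2) by (simp add: \<delta>_def)
    then have "\<omega> \<in> Fs Y" using X(2) w by (auto simp: Fs_def)
    then show "\<omega> \<in> (\<Union>Y\<in>Net. Fs Y)" using YN by blast
  qed
  have mF: "measure (rgg_space n) (Fs Y) = p ^ n" if YN: "Y \<in> Net" for Y
  proof -
    obtain X where X: "admissible r X" "dist X Y \<le> \<delta>" using YN unfolding Net_def by blast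
    have bs: "tbox r Y \<subseteq> unit_sq" using tbox_good[OF r X(1)] X(2) by (simp add: \<delta>_def)
    have mb: "measure lborel (tbox r Y) = r^5/(32*10^7)"
      using tbox_measure[OF r(1), of Y] r by (simp add: measure_def)
    show ?thesis unfolding Fs_def by (simp only: avoid_prob[OF tbox_sets bs] mb p_def)
  qed
  have p0: "0 \<le> p"
  proof -
    have "r^5 \<le> (3/2)^5" using r by (intro power_mono) auto
    moreover have "(3/2::real)^5 \<le> 32*10^7" by (simp add: power_divide)
    ultimately have "r^5 \<le> 32*10^7" by linarith
    then show ?thesis by (simp add: p_def)
  qed
  have "measure (rgg_space n) (space (rgg_space n) - Ev) \<le> measure (rgg_space n) (\<Union>Y\<in>Net. Fs Y)"
    using sub Fss finN by (intro P.finite_measure_mono sets.finite_UN) auto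
  also have "\<dots> \<le> (\<Sum>Y\<in>Net. measure (rgg_space n) (Fs Y))"
    using Fss finN by (intro measure_UNION_le) auto
  also have "\<dots> = real (card Net) * p ^ n" using mF by simp
  also have "\<dots> \<le> real (card (grid \<delta>)) * p ^ n"
    using p0 grid_finite[of \<delta>] by (intro mult_right_mono) (auto simp: Net_def intro: card_mono)
  finally have "measure (rgg_space n) (space (rgg_space n) - Ev) \<le> real (card (grid \<delta>)) * p ^ n" .
  moreover have "measure (rgg_space n) (space (rgg_space n) - Ev) = 1 - measure (rgg_space n) Ev"
    by (rule P.prob_compl[OF Evs])
  ultimately show ?thesis by (simp add: Ev_def \<delta>_def p_def)
qed



lemma no_admissible:
  assumes "r > 3/2"
  shows "\<not> admissible r X"
proof
  assume a: "admissible r X"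
  then have X: "X \<in> unit_sq" and d: "r/2 \<le> dist X centre" by (auto simp: admissible_def)
  have "(fst X - 1/2)^2 \<le> 1/4" "(snd X - 1/2)^2 \<le> 1/4"
  proof -
    have "\<bar>fst X - 1/2\<bar> \<le> 1/2" "\<bar>snd X - 1/2\<bar> \<le> 1/2" unfolding abs_le_iff using X by (auto simp: unit_sq_def mem_Times_iff)
    then have "\<bar>fst X - 1/2\<bar>^2 \<le> (1/2)^2" "\<bar>snd X - 1/2\<bar>^2 \<le> (1/2)^2"
      by (intro power_mono; simp)+
    then show "(fst X - 1/2)^2 \<le> 1/4" "(snd X - 1/2)^2 \<le> 1/4" by (simp_all add: power_divide)
  qed
  then have "(fst X - 1/2)^2 + (snd X - 1/2)^2 \<le> (3/4)^2" by (simp add: power_divide)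
  then have "dist X centre \<le> sqrt ((3/4)^2)" unfolding dist_centre by (rule real_sqrt_le_mono)
  then have "dist X centre \<le> 3/4" by simp
  then show False using d assms by linarith
qed

lemma final_bound:
  fixes r :: real and n :: nat
  assumes n: "n \<ge> 3" and rc: "r ^ 5 > 96 * 10^7 * ln (real n) / real n"
  shows "1 - 16 * 10^12 / real n \<le> measure (rgg_space n)
                 {\<omega> \<in> space (rgg_space n).
                    \<forall>X. admissible r X \<longrightarrow> (\<exists>i<n. \<omega> i \<in> tri r X)}"
proof -
  interpret P: prob_space "rgg_space n" by (rule rgg_prob)
  have n0: "real n > 0" using n by simp
  have ln1: "ln (real n) \<ge> 1"
  proof -
    have "ln 3 \<le> ln (real n)" using n by simp
    then show ?thesis using ln3_gt_1 by linarith
  qed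
  have r5n: "r^5 * real n > 96 * 10^7 * ln (real n)" using rc n0 by (simp add: field_simps)
  have c: "(96*10^7::real) = 960000000" by simp
  have r51: "r^5 * real n \<ge> 1" using r5n ln1 unfolding c by linarith
  have rpos: "r > 0"
  proof (rule ccontr)
    assume "\<not> r > 0"
    then have "r^5 \<le> 0" by (simp add: power_le_zero_eq)
    then have "r^5 * real n \<le> 0" using n0 by (simp add: mult_nonpos_nonneg)
    then show False using r51 by linarith
  qed
  show ?thesis
  proof (cases "r \<le> 3/2")
    case False
    then have "{\<omega> \<in> space (rgg_space n). \<forall>X. admissible r X \<longrightarrow> (\<exists>i<n. \<omega> i \<in> tri r X)}
        = space (rgg_space n)" using no_admissible[of r] by auto
    then show ?thesis using n0 by (simp add: P.prob_space)
  next
    case True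
    define \<delta> where "\<delta> = r^3/(16*10^5)"
    define a where "a = r^5/(32*10^7)"
    define K where "K = (nat \<lceil>1/\<delta>\<rceil> + 1)"
    have B: "measure (rgg_space n)
           {\<omega> \<in> space (rgg_space n). \<forall>X. admissible r X \<longrightarrow> (\<exists>i<n. \<omega> i \<in> tri r X)}
         \<ge> 1 - real (card (grid \<delta>)) * (1 - a)^n"
      using bound_n[OF rpos True] by (simp add: \<delta>_def a_def)
    have a1: "0 \<le> 1 - a"
    proof -
      have "r^5 \<le> (3/2)^5" using rpos True by (intro power_mono) auto
      moreover have "(3/2::real)^5 \<le> 32*10^7" by (simp add: power_divide)
      ultimately show ?thesis by (simp add: a_def)
    qed
    have pn: "(1 - a)^n \<le> 1 / real n ^ 3"
    proof -
      have "(1 - a)^n \<le> exp (-a) ^ n"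
        using a1 exp_ge_add_one_self[of "-a"] by (intro power_mono) auto
      also have "\<dots> = exp (- (a * real n))" by (simp add: exp_of_nat_mult[symmetric] mult.commute)
      also have "\<dots> \<le> exp (- (3 * ln (real n)))"
        using r5n by (simp add: a_def field_simps)
      also have "\<dots> = 1 / real n ^ 3"
      proof -
        have "ln (real n ^ 3) = 3 * ln (real n)" using n0 by (simp add: ln_realpow)
        then have "exp (3 * ln (real n)) = real n ^ 3" using n0 by (metis exp_ln zero_less_power)
        then show ?thesis by (simp add: exp_minus inverse_eq_divide)
      qed
      finally show ?thesis .
    qed
    have dinv: "1/\<delta> \<le> 36 * 10^5 * real n"
    proof -
      have r2: "r^2 \<le> 9/4"
      proof -
        have "r^2 \<le> (3/2)^2" using rpos True by (intro power_mono) auto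
        then show ?thesis by (simp add: power_divide)
      qed
      have "r^5 = r^3 * r^2" by (simp add: power_add[symmetric])
      also have "\<dots> \<le> r^3 * (9/4)" using r2 rpos by (intro mult_left_mono) auto
      finally have "1 \<le> r^3 * (9/4) * real n" using r51 n0
        by (meson mult_right_mono of_nat_0_le_iff order_trans)
      then have "16*10^5 \<le> r^3 * (36 * 10^5 * real n)" by (simp add: algebra_simps)
      then show ?thesis using rpos by (simp add: \<delta>_def field_simps)
    qed
    have Kb: "real K \<le> 4 * 10^6 * real n"
    proof -
      have dp: "1/\<delta> > 0" using rpos by (simp add: \<delta>_def)
      then have "\<lceil>1/\<delta>\<rceil> \<ge> 0" by (simp add: ceiling_le_zero) (use dp in linarith)
      then have e: "real (nat \<lceil>1/\<delta>\<rceil>) = of_int \<lceil>1/\<delta>\<rceil>" by simp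
      have "of_int \<lceil>1/\<delta>\<rceil> < 1/\<delta> + 1" using ceiling_correct[of "1/\<delta>"] by linarith
      then have "real (nat \<lceil>1/\<delta>\<rceil>) \<le> 1/\<delta> + 1" unfolding e by linarith
      then show ?thesis using dinv n by (simp add: K_def)
    qed
    have cg: "real (card (grid \<delta>)) \<le> (4 * 10^6 * real n)^2"
    proof -
      have "real (card (grid \<delta>)) \<le> real (K ^ 2)" unfolding K_def using grid_card[of \<delta>] by (simp only: of_nat_le_iff)
      also have "\<dots> = real K ^ 2" by simp
      also have "\<dots> \<le> (4 * 10^6 * real n)^2" using Kb by (intro power_mono) auto
      finally show ?thesis .
    qed
    have "real (card (grid \<delta>)) * (1 - a)^n \<le> (4 * 10^6 * real n)^2 * (1 / real n ^ 3)"
      using cg pn a1 by (intro mult_mono) auto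
    also have "\<dots> = 16 * 10^12 / real n" using n0 by (simp add: power2_eq_square power3_eq_cube field_simps)
    finally show ?thesis using B by linarith
  qed
qed

theorem lemma2p4:
  shows "\<exists>c>0. \<forall>r :: nat \<Rightarrow> real.
           (\<forall>\<^sub>F n in sequentially. r n ^ 5 > c * ln (real n) / real n) \<longrightarrow>
           ((\<lambda>n. measure (rgg_space n)
                 {\<omega> \<in> space (rgg_space n).
                    \<forall>X. admissible (r n) X \<longrightarrow> (\<exists>i<n. \<omega> i \<in> tri (r n) X)})
             \<longlongrightarrow> 1) sequentially"
proof (intro exI[of _ "96 * 10^7"] conjI allI impI)
  show "(0::real) < 96 * 10^7" by simp
  fix r :: "nat \<Rightarrow> real"
  assume ev: "\<forall>\<^sub>F n in sequentially. r n ^ 5 > 96 * 10^7 * ln (real n) / real n"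
  let ?g = "\<lambda>n. measure (rgg_space n)
                 {\<omega> \<in> space (rgg_space n).
                    \<forall>X. admissible (r n) X \<longrightarrow> (\<exists>i<n. \<omega> i \<in> tri (r n) X)}"
  show "(?g \<longlongrightarrow> 1) sequentially"
  proof (rule tendsto_sandwich)
    show "\<forall>\<^sub>F n in sequentially. 1 - 16 * 10^12 / real n \<le> ?g n"
      using ev eventually_ge_at_top[of 3]
      by eventually_elim (rule final_bound)
    show "\<forall>\<^sub>F n in sequentially. ?g n \<le> 1"
      by (intro always_eventually allI prob_space.prob_le_1[OF rgg_prob])
    show "((\<lambda>n. 1 - 16 * 10^12 / real n) \<longlongrightarrow> 1) sequentially"
      using tendsto_diff[OF tendsto_const[of "1::real"] lim_const_over_n[of "16 * 10^12 :: real"]]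
      by simp
  qed simp
qed

end
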